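(* For every fixed $0<\beta\leq 1$ there exists a constant $c_\beta$ such that the following holds. For every $0<\alpha<1$ and every dimension $d\geq 1$, if $L=[-1,-\beta]\cup\{\alpha\}$, then $N_L(d)\leq c_\beta\, d$; that is, every $L$-spherical code in $\mathbb{R}^d$ has at most $c_\beta d$ elements.
   Context: For a set $L\subseteq[-1,1]$, an $L$-spherical code in $\mathbb{R}^d$ is a set $P$ of unit vectors in $\mathbb{R}^d$ such that $\langle v,v'\rangle\in L$ for every pair of distinct $v,v'\in P$. $N_L(d)$ denotes the maximum cardinality of an $L$-spherical code in $\mathbb{R}^d$. *)

theory Defs
  imports "HOL-Analysis.Analysis"
begin

text \<open>Vectors of R^d are represented as functions nat => real vanishing outside {..<d}.\<close>

definition vec_space :: "nat \<Rightarrow> (nat \<Rightarrow> real) set" where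
  "vec_space d = {v. \<forall>i\<ge>d. v i = 0}"

definition ip :: "nat \<Rightarrow> (nat \<Rightarrow> real) \<Rightarrow> (nat \<Rightarrow> real) \<Rightarrow> real" where
  "ip d v w = (\<Sum>i<d. v i * w i)"

definition spherical_code :: "real set \<Rightarrow> nat \<Rightarrow> (nat \<Rightarrow> real) set \<Rightarrow> bool" where
  "spherical_code L d P \<longleftrightarrow>
     P \<subseteq> vec_space d \<and> (\<forall>v\<in>P. ip d v v = 1) \<and>
     (\<forall>v\<in>P. \<forall>w\<in>P. v \<noteq> w \<longrightarrow> ip d v w \<in> L)"

end

theory Submission
  imports Defs
begin


lemma ip_sym: "ip d v w = ip d w v"
  unfolding ip_def by (simp add: mult.commute)

lemma ip_self_nonneg: "0 \<le> ip d v v"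
  unfolding ip_def by (auto intro: sum_nonneg)

lemma psd:
  assumes "finite S"
  shows "0 \<le> (\<Sum>x\<in>S. \<Sum>y\<in>S. c x * c y * ip d x y)"
proof -
  have "(\<Sum>x\<in>S. \<Sum>y\<in>S. c x * c y * ip d x y) = (\<Sum>x\<in>S. \<Sum>y\<in>S. \<Sum>i<d. (c x * x i) * (c y * y i))"
    unfolding ip_def by (simp add: sum_distrib_left algebra_simps)
  also have "\<dots> = (\<Sum>x\<in>S. \<Sum>i<d. \<Sum>y\<in>S. (c x * x i) * (c y * y i))"
    by (rule sum.cong[OF refl], rule sum.swap)
  also have "\<dots> = (\<Sum>i<d. \<Sum>x\<in>S. \<Sum>y\<in>S. (c x * x i) * (c y * y i))"
    by (rule sum.swap)
  also have "\<dots> = (\<Sum>i<d. (\<Sum>x\<in>S. c x * x i)\<^sup>2)"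
    by (simp add: power2_eq_square sum_product)
  also have "\<dots> \<ge> 0" by (auto intro: sum_nonneg)
  finally show ?thesis by simp
qed

lemma frame:
  assumes "finite S"
  shows "(\<Sum>v\<in>S. ip d (x v) (x v))\<^sup>2 \<le> real d * (\<Sum>v\<in>S. \<Sum>w\<in>S. (ip d (x v) (x w))\<^sup>2)"
proof -
  define F where "F k l = (\<Sum>v\<in>S. x v k * x v l)" for k l
  have 1: "(\<Sum>v\<in>S. ip d (x v) (x v)) = (\<Sum>k<d. F k k)"
    unfolding ip_def F_def by (rule sum.swap)
  have sq: "(\<Sum>k<d. a k * b k)\<^sup>2 = (\<Sum>k<d. \<Sum>l<d. (a k * a l) * (b k * b l))" for a b :: "nat \<Rightarrow> real"
    unfolding power2_eq_square sum_product by (simp add: algebra_simps)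
  have "(\<Sum>v\<in>S. \<Sum>w\<in>S. (ip d (x v) (x w))\<^sup>2) = (\<Sum>v\<in>S. \<Sum>w\<in>S. \<Sum>k<d. \<Sum>l<d. (x v k * x v l) * (x w k * x w l))"
    unfolding ip_def sq ..
  also have "\<dots> = (\<Sum>v\<in>S. \<Sum>k<d. \<Sum>l<d. \<Sum>w\<in>S. (x v k * x v l) * (x w k * x w l))"
    by (simp only: sum.swap[of _ S "{..<d}"])
  also have "\<dots> = (\<Sum>k<d. \<Sum>l<d. \<Sum>v\<in>S. \<Sum>w\<in>S. (x v k * x v l) * (x w k * x w l))"
    by (simp only: sum.swap[of _ S "{..<d}"])
  also have "\<dots> = (\<Sum>k<d. \<Sum>l<d. (F k l)\<^sup>2)"
    unfolding F_def power2_eq_square sum_product ..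
  finally have 2: "(\<Sum>v\<in>S. \<Sum>w\<in>S. (ip d (x v) (x w))\<^sup>2) = (\<Sum>k<d. \<Sum>l<d. (F k l)\<^sup>2)" .
  have 3: "(\<Sum>k<d. (F k k)\<^sup>2) \<le> (\<Sum>k<d. \<Sum>l<d. (F k l)\<^sup>2)"
    by (rule sum_mono) (rule member_le_sum, auto)
  have "(\<Sum>k<d. F k k)\<^sup>2 \<le> (\<Sum>k<d. (F k k)\<^sup>2) * real d"
    using sum_squared_le_sum_of_squares[of "\<lambda>k. F k k" "{..<d}"] by simp
  then show ?thesis using 1 2 3
    by (smt (verit) mult.commute mult_left_mono of_nat_0_le_iff)
qed

lemma card_minus1:
  assumes "finite T" "v \<in> T"
  shows "real (card (T-{v})) = real (card T) - 1"
proof -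
  have "card T \<ge> 1" using assms by (auto simp: Suc_le_eq card_gt_0_iff)
  then show ?thesis using assms by (simp add: card_Diff_singleton of_nat_diff)
qed

lemma row_le:
  fixes f :: "'a \<Rightarrow> real"
  assumes "finite T" "v \<in> T" "f v \<le> a" "\<And>w. w \<in> T \<Longrightarrow> w \<noteq> v \<Longrightarrow> f w \<le> b"
  shows "(\<Sum>w\<in>T. f w) \<le> a + (real (card T) - 1) * b"
proof -
  have 1: "(\<Sum>w\<in>T. f w) = f v + (\<Sum>w\<in>T-{v}. f w)" using assms by (simp add: sum.remove)
  have 2: "(\<Sum>w\<in>T-{v}. f w) \<le> (\<Sum>w\<in>T-{v}. b)" using assms by (intro sum_mono) auto
  have 3: "(\<Sum>w\<in>T-{v}. b) = (real (card T) - 1) * b" using card_minus1[OF assms(1,2)] by simp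
  show ?thesis using 1 2 3 assms(3) by linarith
qed

lemma row_eq:
  fixes f :: "'a \<Rightarrow> real"
  assumes "finite T" "v \<in> T" "f v = a" "\<And>w. w \<in> T \<Longrightarrow> w \<noteq> v \<Longrightarrow> f w = b"
  shows "(\<Sum>w\<in>T. f w) = a + (real (card T) - 1) * b"
proof -
  have 1: "(\<Sum>w\<in>T. f w) = f v + (\<Sum>w\<in>T-{v}. f w)" using assms by (simp add: sum.remove)
  have 2: "(\<Sum>w\<in>T-{v}. f w) = (\<Sum>w\<in>T-{v}. b)" using assms by (intro sum.cong) auto
  have 3: "(\<Sum>w\<in>T-{v}. b) = (real (card T) - 1) * b" using card_minus1[OF assms(1,2)] by simp
  show ?thesis using 1 2 3 assms(3) by linarith
qed



definition code :: "real \<Rightarrow> real \<Rightarrow> nat \<Rightarrow> (nat \<Rightarrow> real) set \<Rightarrow> bool" where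
  "code \<beta> \<alpha> d P \<longleftrightarrow> P \<subseteq> vec_space d \<and> (\<forall>v\<in>P. ip d v v = 1) \<and>
     (\<forall>v\<in>P. \<forall>w\<in>P. v \<noteq> w \<longrightarrow> ip d v w \<le> -\<beta> \<or> ip d v w = \<alpha>)"

lemma neg_clique:
  assumes "finite K" "0 < \<beta>" "\<forall>v\<in>K. ip d v v = 1"
    "\<forall>v\<in>K. \<forall>w\<in>K. v \<noteq> w \<longrightarrow> ip d v w \<le> -\<beta>"
  shows "real (card K) \<le> 1 + 1/\<beta>"
proof (cases "K = {}")
  case True then show ?thesis using assms by simp
next
  case False
  define k where "k = real (card K)"
  have kpos: "k \<ge> 1" using False assms(1) unfolding k_def
    by (simp add: Suc_le_eq card_gt_0_iff)
  have "0 \<le> (\<Sum>x\<in>K. \<Sum>y\<in>K. (\<lambda>_. 1::real) x * (\<lambda>_. 1) y * ip d x y)" by (rule psd[OF assms(1)])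
  also have "\<dots> \<le> (\<Sum>x\<in>K. 1 + (k - 1) * (-\<beta>))"
  proof (rule sum_mono)
    fix x assume x: "x \<in> K"
    have "(\<Sum>y\<in>K. ip d x y) \<le> 1 + (real (card K) - 1) * (-\<beta>)"
      by (rule row_le[OF assms(1) x]) (use assms x in auto)
    then show "(\<Sum>y\<in>K. (\<lambda>_. 1::real) x * (\<lambda>_. 1) y * ip d x y) \<le> 1 + (k - 1) * (-\<beta>)"
      by (simp add: k_def)
  qed
  also have "\<dots> = k * (1 - (k-1)*\<beta>)" by (simp add: k_def)
  finally have "0 \<le> 1 - (k-1)*\<beta>" using kpos
    by (simp add: zero_le_mult_iff)
  then have "(k-1) * \<beta> \<le> 1" by simp
  then have "k - 1 \<le> 1/\<beta>" using assms(2) by (simp add: field_simps)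
  then show ?thesis unfolding k_def by simp
qed


lemma neg_degree:
  assumes "finite T" "0 < \<beta>" "v \<notin> T" "ip d v v = 1" "\<forall>w\<in>T. ip d w w = 1"
    "\<forall>w\<in>T. ip d v w \<le> -\<beta>" "\<forall>w\<in>T. \<forall>w'\<in>T. w \<noteq> w' \<longrightarrow> ip d w w' \<le> \<alpha>"
    "0 \<le> \<alpha>" "\<alpha> \<le> \<beta>\<^sup>2/2"
  shows "real (card T) \<le> 2/\<beta>\<^sup>2"
proof -
  define t where "t = real (card T)"
  define c where "c x = (if x = v then \<beta> * t else 1)" for x
  define g where "g x y = c x * c y * ip d x y" for x y
  have t0: "t \<ge> 0" by (simp add: t_def)
  have P: "0 \<le> (\<Sum>x\<in>insert v T. \<Sum>y\<in>insert v T. g x y)"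
    unfolding g_def by (rule psd) (use assms in simp)
  have cT: "\<And>x. x \<in> T \<Longrightarrow> c x = 1" using assms(3) by (auto simp: c_def)
  have s1: "(\<Sum>y\<in>T. ip d v y) \<le> t * (-\<beta>)"
    using sum_bounded_above[of T "ip d v" "-\<beta>"] assms(6) by (simp add: t_def)
  have s2: "(\<Sum>x\<in>T. ip d x v) \<le> t * (-\<beta>)"
    using sum_bounded_above[of T "\<lambda>x. ip d x v" "-\<beta>"] assms(6) by (simp add: t_def ip_sym)
  have s3: "(\<Sum>x\<in>T. \<Sum>y\<in>T. ip d x y) \<le> (\<Sum>x\<in>T. 1 + (t - 1) * \<alpha>)"
  proof (rule sum_mono)
    fix x assume x: "x \<in> T"
    show "(\<Sum>y\<in>T. ip d x y) \<le> 1 + (t - 1) * \<alpha>"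
      unfolding t_def by (rule row_le[OF assms(1) x]) (use assms x in auto)
  qed
  have s3': "(\<Sum>x\<in>T. 1 + (t - 1) * \<alpha>) \<le> t + t*t*\<alpha>"
    using assms(8) t0 by (simp add: t_def[symmetric] algebra_simps)
  have "(\<Sum>x\<in>insert v T. \<Sum>y\<in>insert v T. g x y) =
        (\<Sum>y\<in>insert v T. g v y) + (\<Sum>x\<in>T. \<Sum>y\<in>insert v T. g x y)"
    using assms(1,3) by simp
  also have "(\<Sum>y\<in>insert v T. g v y) = g v v + (\<Sum>y\<in>T. g v y)"
    using assms(1,3) by simp
  also have "(\<Sum>y\<in>T. g v y) = \<beta> * t * (\<Sum>y\<in>T. ip d v y)"
    by (simp add: g_def c_def sum_distrib_left cT) (rule sum.cong, use assms(3) in auto)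
  also have "(\<Sum>x\<in>T. \<Sum>y\<in>insert v T. g x y) = (\<Sum>x\<in>T. g x v + (\<Sum>y\<in>T. g x y))"
    using assms(1,3) by simp
  also have "\<dots> = \<beta> * t * (\<Sum>x\<in>T. ip d x v) + (\<Sum>x\<in>T. \<Sum>y\<in>T. ip d x y)"
  proof -
    have gTT: "\<And>x y. x\<in>T \<Longrightarrow> y\<in>T \<Longrightarrow> g x y = ip d x y" by (simp add: g_def cT)
    have gTv: "\<And>x. x\<in>T \<Longrightarrow> g x v = \<beta>*t*ip d x v" by (simp add: g_def cT) (simp add: c_def)
    have "(\<Sum>x\<in>T. g x v + (\<Sum>y\<in>T. g x y)) = (\<Sum>x\<in>T. \<beta>*t*ip d x v + (\<Sum>y\<in>T. ip d x y))"
      by (rule sum.cong) (auto simp: gTT gTv)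
    then show ?thesis by (simp add: sum.distrib sum_distrib_left)
  qed
  finally have E: "(\<Sum>x\<in>insert v T. \<Sum>y\<in>insert v T. g x y) =
     \<beta>*\<beta>*t*t + \<beta> * t * (\<Sum>y\<in>T. ip d v y) + (\<beta> * t * (\<Sum>x\<in>T. ip d x v) + (\<Sum>x\<in>T. \<Sum>y\<in>T. ip d x y))"
    using assms(4) by (simp add: g_def c_def)
  have m1: "\<beta> * t * (\<Sum>y\<in>T. ip d v y) \<le> \<beta> * t * (t * (-\<beta>))"
    using s1 assms(2) t0 by (intro mult_left_mono) auto
  have m2: "\<beta> * t * (\<Sum>x\<in>T. ip d x v) \<le> \<beta> * t * (t * (-\<beta>))"
    using s2 assms(2) t0 by (intro mult_left_mono) auto
  have "0 \<le> \<beta>*\<beta>*t*t - 2*\<beta>*\<beta>*t*t + t + t*t*\<alpha>"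
    using P E m1 m2 s3 s3' by (simp add: algebra_simps)
  also have "t*t*\<alpha> \<le> t*t*(\<beta>\<^sup>2/2)" using assms(9) t0 by (intro mult_left_mono) auto
  finally have "0 \<le> t * (1 - t * \<beta>\<^sup>2 / 2)" by (simp add: algebra_simps power2_eq_square)
  then have "t = 0 \<or> t * \<beta>\<^sup>2 / 2 \<le> 1" using t0 by (auto simp: zero_le_mult_iff)
  then have "t \<le> 2/\<beta>\<^sup>2" using assms(2) by (auto simp: field_simps)
  then show ?thesis by (simp add: t_def)
qed


lemma ip_diff: "ip d (\<lambda>i. a i - b i) (\<lambda>i. c i - e i) = ip d a c - ip d a e - ip d b c + ip d b e"
  unfolding ip_def by (simp add: left_diff_distrib right_diff_distrib sum_subtractf sum.distrib)

lemma ip_mean: "ip d a (\<lambda>i. (\<Sum>s\<in>S. s i) / k) = (\<Sum>s\<in>S. ip d a s) / k"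
proof -
  have "ip d a (\<lambda>i. (\<Sum>s\<in>S. s i) / k) = (\<Sum>i<d. \<Sum>s\<in>S. a i * s i) / k"
    unfolding ip_def by (simp add: sum_distrib_left sum_divide_distrib)
  also have "\<dots> = (\<Sum>s\<in>S. ip d a s) / k"
    unfolding ip_def by (subst sum.swap) simp
  finally show ?thesis .
qed

lemma clique_alg:
  fixes k \<alpha> D :: real
  assumes "k \<ge> 2" "\<alpha> < 1" "D \<ge> 0"
    "(k * (1 - (1 + (k-1)*\<alpha>)/k))\<^sup>2 \<le> D * (k * ((1 - (1 + (k-1)*\<alpha>)/k)\<^sup>2 + (k-1) * (\<alpha> - (1 + (k-1)*\<alpha>)/k)\<^sup>2))"
  shows "k \<le> D + 1"
proof -
  have e1: "k * (1 - (1 + (k-1)*\<alpha>)/k) = (k-1)*(1-\<alpha>)" using assms(1) by (simp add: field_simps)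
  have e2: "k * ((1 - (1 + (k-1)*\<alpha>)/k)\<^sup>2 + (k-1) * (\<alpha> - (1 + (k-1)*\<alpha>)/k)\<^sup>2) = (k-1)*(1-\<alpha>)\<^sup>2"
    using assms(1) by (simp add: field_simps power2_eq_square)
  have "((k-1)*(1-\<alpha>))\<^sup>2 \<le> D * ((k-1)*(1-\<alpha>)\<^sup>2)" using assms(4) e1 e2 by simp
  then have "(k-1) * ((k-1)*(1-\<alpha>)\<^sup>2) \<le> D * ((k-1)*(1-\<alpha>)\<^sup>2)" by (simp add: power2_eq_square algebra_simps)
  moreover have "(k-1)*(1-\<alpha>)\<^sup>2 > 0" using assms by simp
  ultimately have "k - 1 \<le> D" using mult_right_le_imp_le by blast
  then show ?thesis by simp
qed



lemma pos_clique:
  assumes "finite S" "\<forall>v\<in>S. ip d v v = 1" "\<forall>v\<in>S. \<forall>w\<in>S. v \<noteq> w \<longrightarrow> ip d v w = \<alpha>" "\<alpha> < 1"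
  shows "real (card S) \<le> real d + 1"
proof (cases "card S \<ge> 2")
  case False then show ?thesis by simp
next
  case True
  define k where "k = real (card S)"
  define c where "c = 1 + (k-1)*\<alpha>"
  define q where "q = c / k"
  define m where "m = (\<lambda>i. (\<Sum>s\<in>S. s i) / k)"
  define x where "x v = (\<lambda>i. v i - m i)" for v :: "nat \<Rightarrow> real"
  have k2: "k \<ge> 2" using True by (simp add: k_def)
  have row: "(\<Sum>s\<in>S. ip d v s) = c" if "v \<in> S" for v
    unfolding c_def k_def by (rule row_eq[OF assms(1) that]) (use assms that in auto)
  have vm: "ip d v m = q" if "v \<in> S" for v
    unfolding m_def q_def ip_mean row[OF that] ..
  have mv: "ip d m v = q" if "v \<in> S" for v
    using vm[OF that] by (simp add: ip_sym)
  have mm: "ip d m m = q"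
  proof -
    have "ip d m m = (\<Sum>s\<in>S. ip d m s) / k" unfolding m_def by (rule ip_mean)
    also have "(\<Sum>s\<in>S. ip d m s) = (\<Sum>s\<in>S. q)" by (rule sum.cong) (auto simp: mv)
    also have "\<dots> = k * q" by (simp add: k_def)
    finally show ?thesis using k2 by simp
  qed
  have xx: "ip d (x v) (x w) = ip d v w - q" if "v \<in> S" "w \<in> S" for v w
    unfolding x_def ip_diff using vm[OF that(1)] mv[OF that(2)] mm by simp
  have s1: "(\<Sum>v\<in>S. ip d (x v) (x v)) = k * (1 - q)"
    using assms(2) by (simp add: xx k_def)
  have s2: "(\<Sum>v\<in>S. \<Sum>w\<in>S. (ip d (x v) (x w))\<^sup>2) = k * ((1 - q)\<^sup>2 + (k - 1) * (\<alpha> - q)\<^sup>2)"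
  proof -
    have "(\<Sum>v\<in>S. \<Sum>w\<in>S. (ip d (x v) (x w))\<^sup>2) = (\<Sum>v\<in>S. (1 - q)\<^sup>2 + (k - 1) * (\<alpha> - q)\<^sup>2)"
    proof (rule sum.cong[OF refl])
      fix v assume v: "v \<in> S"
      show "(\<Sum>w\<in>S. (ip d (x v) (x w))\<^sup>2) = (1 - q)\<^sup>2 + (k - 1) * (\<alpha> - q)\<^sup>2"
        unfolding k_def by (rule row_eq[OF assms(1) v]) (use assms v in \<open>auto simp: xx\<close>)
    qed
    then show ?thesis by (simp add: k_def)
  qed
  have "(k * (1 - q))\<^sup>2 \<le> real d * (k * ((1 - q)\<^sup>2 + (k - 1) * (\<alpha> - q)\<^sup>2))"
    using frame[OF assms(1), of d x] s1 s2 by simp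
  then have "k \<le> real d + 1"
    by (intro clique_alg[OF k2 assms(4)]) (auto simp: q_def c_def)
  then show ?thesis by (simp add: k_def)
qed



lemma coloring:
  fixes R :: "'a \<Rightarrow> 'a \<Rightarrow> bool"
  assumes "finite P" "\<forall>v\<in>P. card {w\<in>P. R v w} \<le> D" "\<And>v w. R v w \<Longrightarrow> R w v" "\<And>v. \<not> R v v"
  shows "\<exists>f. (\<forall>v\<in>P. f v \<le> D) \<and> (\<forall>v\<in>P. \<forall>w\<in>P. R v w \<longrightarrow> f v \<noteq> f w)"
  using assms(1,2)
proof (induction P rule: finite_induct)
  case empty then show ?case by auto
next
  case (insert x F)
  have "\<forall>v\<in>F. card {w\<in>F. R v w} \<le> D"
  proof
    fix v assume v: "v \<in> F"
    have "card {w\<in>F. R v w} \<le> card {w\<in>insert x F. R v w}"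
      by (rule card_mono) (use insert in auto)
    then show "card {w\<in>F. R v w} \<le> D" using insert.prems v by force
  qed
  then obtain f where f: "\<forall>v\<in>F. f v \<le> D" "\<forall>v\<in>F. \<forall>w\<in>F. R v w \<longrightarrow> f v \<noteq> f w"
    using insert.IH by blast
  define N where "N = {w\<in>F. R x w}"
  have "card N \<le> card {w\<in>insert x F. R x w}"
    unfolding N_def by (rule card_mono) (use insert in auto)
  then have cN: "card N \<le> D" using insert.prems by force
  have "card (f ` N) \<le> D" using cN card_image_le[of N f] insert(1) N_def by force
  then have "card (f ` N) < card {0..D}" by simp
  moreover have "finite (f ` N)" using insert(1) by (simp add: N_def)
  ultimately have "\<not> {0..D} \<subseteq> f ` N" using card_mono[of "f ` N" "{0..D}"] by linarith
  then obtain c where c: "c \<in> {0..D}" "c \<notin> f ` N" by blast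
  define g where "g = f(x := c)"
  have "\<forall>v\<in>insert x F. g v \<le> D" using f c insert by (auto simp: g_def)
  moreover have "\<forall>v\<in>insert x F. \<forall>w\<in>insert x F. R v w \<longrightarrow> g v \<noteq> g w"
  proof (intro ballI impI)
    fix v w assume v: "v \<in> insert x F" and w: "w \<in> insert x F" and R: "R v w"
    show "g v \<noteq> g w"
    proof (cases "v = x")
      case True
      then have "w \<noteq> x" using R assms(4) by auto
      then have "w \<in> N" using w R True by (auto simp: N_def)
      then show ?thesis using c True \<open>w \<noteq> x\<close> insert(2) by (auto simp: g_def)
    next
      case False
      note vF = False
      show ?thesis
      proof (cases "w = x")
        case True
        then have "v \<in> N" using v vF R assms(3) by (auto simp: N_def)
        then show ?thesis using c True vF by (auto simp: g_def)
      next
        case False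
        then show ?thesis using f vF v w R by (auto simp: g_def)
      qed
    qed
  qed
  ultimately show ?case by blast
qed


lemma base:
  assumes "0 < \<beta>" "0 < \<alpha>" "\<alpha> \<le> \<beta>\<^sup>2/2" "\<alpha> < 1" "finite P" "code \<beta> \<alpha> d P"
  shows "real (card P) \<le> (2/\<beta>\<^sup>2 + 1) * (real d + 1)"
proof -
  define D where "D = nat \<lfloor>2/\<beta>\<^sup>2\<rfloor>"
  define R where "R v w \<longleftrightarrow> v \<noteq> w \<and> ip d v w \<le> -\<beta>" for v w
  have unit: "\<forall>v\<in>P. ip d v v = 1" and dist: "\<forall>v\<in>P. \<forall>w\<in>P. v \<noteq> w \<longrightarrow> ip d v w \<le> -\<beta> \<or> ip d v w = \<alpha>"
    using assms(6) by (auto simp: code_def)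
  have deg: "\<forall>v\<in>P. card {w\<in>P. R v w} \<le> D"
  proof
    fix v assume v: "v \<in> P"
    have "real (card {w\<in>P. R v w}) \<le> 2/\<beta>\<^sup>2"
    proof (rule neg_degree[where \<alpha> = \<alpha>])
      show "\<forall>w\<in>{w \<in> P. R v w}. \<forall>w'\<in>{w \<in> P. R v w}. w \<noteq> w' \<longrightarrow> ip d w w' \<le> \<alpha>"
      proof (intro ballI impI)
        fix w w' assume w: "w \<in> {w \<in> P. R v w}" and w': "w' \<in> {w \<in> P. R v w}" and ne: "w \<noteq> w'"
        have "w \<in> P" "w' \<in> P" using w w' by auto
        then have "ip d w w' \<le> -\<beta> \<or> ip d w w' = \<alpha>" using dist ne by blast
        then show "ip d w w' \<le> \<alpha>" using assms(1,2) by linarith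
      qed
    next
      show "finite {w \<in> P. R v w}" using assms(5) by simp
    next
      show "v \<notin> {w \<in> P. R v w}" by (simp add: R_def)
    next
      show "ip d v v = 1" using unit v by blast
    next
      show "\<forall>w\<in>{w \<in> P. R v w}. ip d w w = 1" using unit by blast
    next
      show "\<forall>w\<in>{w \<in> P. R v w}. ip d v w \<le> -\<beta>" by (simp add: R_def)
    qed (use assms in linarith)+
    then show "card {w\<in>P. R v w} \<le> D" unfolding D_def
      by (simp add: le_nat_floor)
  qed
  obtain f where f: "\<forall>v\<in>P. f v \<le> D" "\<forall>v\<in>P. \<forall>w\<in>P. R v w \<longrightarrow> f v \<noteq> f w"
  proof -
    have sym: "\<And>v w. R v w \<Longrightarrow> R w v" by (auto simp: R_def ip_sym)
    have irr: "\<And>v. \<not> R v v" by (simp add: R_def)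
    show ?thesis using coloring[OF assms(5) deg sym irr] that by blast
  qed
  have PU: "P = (\<Union>c\<in>{0..D}. {v\<in>P. f v = c})" using f(1) by auto
  have "card P \<le> (\<Sum>c\<in>{0..D}. card {v\<in>P. f v = c})"
    by (subst PU) (rule card_UN_le, simp)
  then have "real (card P) \<le> (\<Sum>c\<in>{0..D}. real (card {v\<in>P. f v = c}))"
    unfolding of_nat_sum[symmetric] of_nat_le_iff .
  also have "\<dots> \<le> (\<Sum>c\<in>{0..D}. real d + 1)"
  proof (rule sum_mono)
    fix c assume "c \<in> {0..D}"
    show "real (card {v\<in>P. f v = c}) \<le> real d + 1"
    proof (rule pos_clique[where \<alpha> = \<alpha>])
      show "\<forall>v\<in>{v \<in> P. f v = c}. \<forall>w\<in>{v \<in> P. f v = c}. v \<noteq> w \<longrightarrow> ip d v w = \<alpha>"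
      proof (intro ballI impI)
        fix v w assume v: "v \<in> {v \<in> P. f v = c}" and w: "w \<in> {v \<in> P. f v = c}" and ne: "v \<noteq> w"
        have vP: "v \<in> P" and wP: "w \<in> P" and eq: "f v = f w" using v w by auto
        have "\<not> R v w" using f(2) vP wP eq by blast
        then show "ip d v w = \<alpha>" using dist v w ne by (auto simp: R_def)
      qed
    qed (use assms unit in auto)
  qed
  also have "\<dots> = (real D + 1) * (real d + 1)" by simp
  also have "\<dots> \<le> (2/\<beta>\<^sup>2 + 1) * (real d + 1)"
  proof -
    have "real D \<le> 2/\<beta>\<^sup>2" unfolding D_def using assms(1)
      by (simp add: of_nat_floor)
    then show ?thesis by (intro mult_right_mono) auto
  qed
  finally show ?thesis .
qed



lemma ip_proj:
  "ip d (\<lambda>i. (a i - t * u i) / r) (\<lambda>i. (b i - t * u i) / r)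
     = (ip d a b - t * ip d a u - t * ip d u b + t\<^sup>2 * ip d u u) / r\<^sup>2"
proof -
  have "ip d (\<lambda>i. (a i - t * u i) / r) (\<lambda>i. (b i - t * u i) / r)
      = (\<Sum>i<d. (a i * b i - t * (a i * u i) - t * (u i * b i) + t\<^sup>2 * (u i * u i)) / r\<^sup>2)"
    unfolding ip_def by (rule sum.cong) (auto simp: field_simps power2_eq_square)
  also have "\<dots> = (ip d a b - t * ip d a u - t * ip d u b + t\<^sup>2 * ip d u u) / r\<^sup>2"
    unfolding ip_def sum_divide_distrib[symmetric]
    by (simp add: sum.distrib sum_subtractf sum_distrib_left)
  finally show ?thesis .
qed

lemma proj:
  assumes "0 < \<beta>" "\<beta> \<le> 1" "0 < \<alpha>" "\<alpha> < 1" "finite P" "code \<beta> \<alpha> d P" "u \<in> P"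
  shows "\<exists>Q. finite Q \<and> code \<beta> (\<alpha>/(1+\<alpha>)) d Q \<and> card Q = card {w\<in>P. w \<noteq> u \<and> ip d u w = \<alpha>}"
proof -
  define W where "W = {w\<in>P. w \<noteq> u \<and> ip d u w = \<alpha>}"
  define r where "r = sqrt (1 - \<alpha>\<^sup>2)"
  define \<phi> where "\<phi> w = (\<lambda>i. (w i - \<alpha> * u i) / r)" for w :: "nat \<Rightarrow> real"
  have "\<alpha> * \<alpha> < \<alpha> * 1" by (rule mult_strict_left_mono) (use assms(3,4) in auto)
  then have a2: "\<alpha>\<^sup>2 < 1" using assms(4) by (simp add: power2_eq_square)
  have r2: "r\<^sup>2 = 1 - \<alpha>\<^sup>2" unfolding r_def using a2 by simp
  have rnz: "r \<noteq> 0" using r2 a2 by auto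
  have unit: "\<forall>v\<in>P. ip d v v = 1" and dist: "\<forall>v\<in>P. \<forall>w\<in>P. v \<noteq> w \<longrightarrow> ip d v w \<le> -\<beta> \<or> ip d v w = \<alpha>"
    and sub: "P \<subseteq> vec_space d"
    using assms(6) by (auto simp: code_def)
  have ipW: "ip d (\<phi> a) (\<phi> b) = (ip d a b - \<alpha>\<^sup>2) / (1 - \<alpha>\<^sup>2)" if "a \<in> W" "b \<in> W" for a b
  proof -
    have "ip d a u = \<alpha>" "ip d u b = \<alpha>" "ip d u u = 1"
      using that assms(7) unit by (auto simp: W_def ip_sym)
    then show ?thesis unfolding \<phi>_def ip_proj r2 by (simp add: power2_eq_square)
  qed
  have inj: "inj_on \<phi> W"
  proof (rule inj_onI)
    fix a b assume "\<phi> a = \<phi> b"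
    then have "\<And>i. (a i - \<alpha> * u i) / r = (b i - \<alpha> * u i) / r" unfolding \<phi>_def by meson
    then have "\<And>i. a i = b i" using rnz by (simp add: divide_cancel_right)
    then show "a = b" by blast
  qed
  have "code \<beta> (\<alpha>/(1+\<alpha>)) d (\<phi> ` W)"
    unfolding code_def
  proof (intro conjI ballI impI)
    show "\<phi> ` W \<subseteq> vec_space d"
    proof
      fix x assume "x \<in> \<phi> ` W"
      then obtain a where a: "a \<in> P" "x = \<phi> a" by (auto simp: W_def)
      have "\<forall>i\<ge>d. a i = 0" "\<forall>i\<ge>d. u i = 0" using sub a assms(7) by (auto simp: vec_space_def)
      then show "x \<in> vec_space d" using a by (simp add: vec_space_def \<phi>_def)
    qed
  next
    fix x assume "x \<in> \<phi> ` W"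
    then obtain a where a: "a \<in> W" "x = \<phi> a" by blast
    have "ip d a a = 1" using a unit by (auto simp: W_def)
    then show "ip d x x = 1" using ipW[OF a(1) a(1)] a a2 by simp
  next
    fix x y assume "x \<in> \<phi> ` W" "y \<in> \<phi> ` W" "x \<noteq> y"
    then obtain a b where a: "a \<in> W" "x = \<phi> a" and b: "b \<in> W" "y = \<phi> b" and ab: "a \<noteq> b" by blast
    have "ip d a b \<le> -\<beta> \<or> ip d a b = \<alpha>" using dist a b ab by (auto simp: W_def)
    then show "ip d x y \<le> -\<beta> \<or> ip d x y = \<alpha> / (1 + \<alpha>)"
    proof
      assume h: "ip d a b \<le> -\<beta>"
      have "ip d a b - \<alpha>\<^sup>2 \<le> -\<beta> * (1 - \<alpha>\<^sup>2)"
      proof -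
        have "0 \<le> \<beta> * \<alpha>\<^sup>2" using assms(1) by simp
        moreover have "0 \<le> \<alpha>\<^sup>2" by simp
        moreover have "-\<beta> * (1 - \<alpha>\<^sup>2) = -\<beta> + \<beta> * \<alpha>\<^sup>2" by (simp add: algebra_simps)
        ultimately show ?thesis using h by linarith
      qed
      then have "(ip d a b - \<alpha>\<^sup>2) / (1 - \<alpha>\<^sup>2) \<le> -\<beta>" using a2 by (simp add: divide_le_eq)
      then show ?thesis using ipW[OF a(1) b(1)] a b by simp
    next
      assume h: "ip d a b = \<alpha>"
      have "(\<alpha> - \<alpha>\<^sup>2) / (1 - \<alpha>\<^sup>2) = \<alpha> / (1 + \<alpha>)"
      proof -
        have e1: "1 - \<alpha>\<^sup>2 = (1-\<alpha>)*(1+\<alpha>)" by (simp add: power2_eq_square algebra_simps)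
        have e2: "\<alpha> - \<alpha>\<^sup>2 = \<alpha>*(1-\<alpha>)" by (simp add: power2_eq_square algebra_simps)
        have "1 - \<alpha> \<noteq> 0" using assms(4) by simp
        then show ?thesis unfolding e1 e2 by simp
      qed
      then show ?thesis using ipW[OF a(1) b(1)] a b h by simp
    qed
  qed
  moreover have "finite (\<phi> ` W)" using assms(5) by (simp add: W_def)
  moreover have "card (\<phi> ` W) = card W" using inj by (rule card_image)
  ultimately show ?thesis unfolding W_def by blast
qed



lemma code_subset: "code \<beta> \<alpha> d P \<Longrightarrow> Q \<subseteq> P \<Longrightarrow> code \<beta> \<alpha> d Q"
  unfolding code_def by blast

lemma step:
  assumes b: "0 < \<beta>" "\<beta> \<le> 1" and B0: "B \<ge> 0"
    and IH: "\<And>\<alpha>' d' Q. 0 < \<alpha>' \<Longrightarrow> \<alpha>' < 1 \<Longrightarrow> 2/\<beta>\<^sup>2 \<le> 1/\<alpha>' + real n \<Longrightarrow> finite Q \<Longrightarrow> code \<beta> \<alpha>' d' Q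
               \<Longrightarrow> real (card Q) \<le> B * (real d' + 1)"
    and a: "0 < \<alpha>" "\<alpha> < 1" "2/\<beta>\<^sup>2 \<le> 1/\<alpha> + real (Suc n)"
    and P: "finite P" "code \<beta> \<alpha> d P"
  shows "real (card P) \<le> (1 + 1/\<beta>) * (1 + B) * (real d + 1)"
proof -
  have unit: "\<forall>v\<in>P. ip d v v = 1" and dist: "\<forall>v\<in>P. \<forall>w\<in>P. v \<noteq> w \<longrightarrow> ip d v w \<le> -\<beta> \<or> ip d v w = \<alpha>"
    using P(2) by (auto simp: code_def)
  define Ks where "Ks = {K. K \<subseteq> P \<and> (\<forall>v\<in>K. \<forall>w\<in>K. v \<noteq> w \<longrightarrow> ip d v w \<le> -\<beta>)}"
  have "Ks \<subseteq> Pow P" by (auto simp: Ks_def)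
  then have fKs: "finite Ks" using P(1) finite_subset by blast
  have "{} \<in> Ks" by (simp add: Ks_def)
  then have "Max (card ` Ks) \<in> card ` Ks" using fKs by (intro Max_in) auto
  then obtain K where K: "K \<in> Ks" "card K = Max (card ` Ks)" by auto
  have maxK: "card K' \<le> card K" if "K' \<in> Ks" for K'
    using K(2) fKs that by simp
  have KP: "K \<subseteq> P" and Kneg: "\<forall>v\<in>K. \<forall>w\<in>K. v \<noteq> w \<longrightarrow> ip d v w \<le> -\<beta>" using K(1) by (auto simp: Ks_def)
  have fK: "finite K" using KP P(1) finite_subset by blast
  define W where "W u = {w\<in>P. w \<noteq> u \<and> ip d u w = \<alpha>}" for u
  have cW: "real (card (W u)) \<le> B * (real d + 1)" if u: "u \<in> K" for u
  proof -
    obtain Q where Q: "finite Q" "code \<beta> (\<alpha>/(1+\<alpha>)) d Q" "card Q = card (W u)"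
      using proj[OF b a(1,2) P] u KP unfolding W_def by blast
    have "1/(\<alpha>/(1+\<alpha>)) = 1/\<alpha> + 1" using a(1) by (simp add: field_simps)
    then have "2/\<beta>\<^sup>2 \<le> 1/(\<alpha>/(1+\<alpha>)) + real n" using a(3) by simp
    moreover have "0 < \<alpha>/(1+\<alpha>)" "\<alpha>/(1+\<alpha>) < 1" using a(1) by (auto simp: field_simps)
    ultimately have "real (card Q) \<le> B * (real d + 1)" using IH Q(1,2) by blast
    then show ?thesis using Q(3) by simp
  qed
  have cover: "P \<subseteq> K \<union> (\<Union>u\<in>K. W u)"
  proof
    fix v assume v: "v \<in> P"
    show "v \<in> K \<union> (\<Union>u\<in>K. W u)"
    proof (rule ccontr)
      assume nv: "v \<notin> K \<union> (\<Union>u\<in>K. W u)"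
      have neg: "ip d u v \<le> -\<beta>" if "u \<in> K" for u
      proof -
        have "u \<noteq> v" using nv that by auto
        moreover have "v \<notin> W u" using nv that by auto
        ultimately show ?thesis using dist v that KP by (auto simp: W_def)
      qed
      have "insert v K \<in> Ks" unfolding Ks_def
        using KP v Kneg neg by (auto simp: ip_sym)
      then have "card (insert v K) \<le> card K" by (rule maxK)
      moreover have "card (insert v K) = card K + 1" using nv fK by simp
      ultimately show False by simp
    qed
  qed
  have "card P \<le> card (K \<union> (\<Union>u\<in>K. W u))" using cover by (rule card_mono[rotated]) (use fK P(1) in \<open>auto simp: W_def\<close>)
  also have "\<dots> \<le> card K + card (\<Union>u\<in>K. W u)" by (rule card_Un_le)
  also have "\<dots> \<le> card K + (\<Sum>u\<in>K. card (W u))" using card_UN_le[OF fK, of W] by simp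
  finally have "real (card P) \<le> real (card K) + (\<Sum>u\<in>K. real (card (W u)))"
    unfolding of_nat_sum[symmetric] of_nat_add[symmetric] of_nat_le_iff .
  also have "(\<Sum>u\<in>K. real (card (W u))) \<le> (\<Sum>u\<in>K. B * (real d + 1))" by (rule sum_mono) (rule cW)
  also have "real (card K) + (\<Sum>u\<in>K. B * (real d + 1)) = real (card K) * (1 + B * (real d + 1))"
    by (simp add: algebra_simps)
  also have "\<dots> \<le> (1 + 1/\<beta>) * (1 + B * (real d + 1))"
  proof (rule mult_right_mono)
    show "real (card K) \<le> 1 + 1/\<beta>" by (rule neg_clique[OF fK b(1)]) (use unit KP Kneg in auto)
    show "0 \<le> 1 + B * (real d + 1)" using B0 by simp
  qed
  also have "\<dots> \<le> (1 + 1/\<beta>) * ((1 + B) * (real d + 1))"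
    using b(1) B0 by (intro mult_left_mono) (auto simp: algebra_simps)
  finally show ?thesis by (simp add: mult.assoc)
qed

lemma induct_bound:
  assumes b: "0 < \<beta>" "\<beta> \<le> 1"
  shows "\<exists>B\<ge>0. \<forall>\<alpha> d P. 0 < \<alpha> \<and> \<alpha> < 1 \<and> 2/\<beta>\<^sup>2 \<le> 1/\<alpha> + real n \<and> finite P \<and> code \<beta> \<alpha> d P
           \<longrightarrow> real (card P) \<le> B * (real d + 1)"
proof (induction n)
  case 0
  show ?case
  proof (intro exI[of _ "2/\<beta>\<^sup>2 + 1"] conjI allI impI)
    show "0 \<le> 2/\<beta>\<^sup>2 + 1" by simp
  next
    fix \<alpha> d P assume h: "0 < \<alpha> \<and> \<alpha> < 1 \<and> 2/\<beta>\<^sup>2 \<le> 1/\<alpha> + real 0 \<and> finite P \<and> code \<beta> \<alpha> d P"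
    then have "2/\<beta>\<^sup>2 \<le> 1/\<alpha>" by simp
    then have "2 * \<alpha> \<le> \<beta>\<^sup>2" using h b by (simp add: field_simps)
    then have "\<alpha> \<le> \<beta>\<^sup>2/2" by simp
    then show "real (card P) \<le> (2/\<beta>\<^sup>2 + 1) * (real d + 1)"
      using base[OF b(1)] h by blast
  qed
next
  case (Suc n)
  then obtain B where B: "B \<ge> 0" "\<forall>\<alpha> d P. 0 < \<alpha> \<and> \<alpha> < 1 \<and> 2/\<beta>\<^sup>2 \<le> 1/\<alpha> + real n \<and> finite P \<and> code \<beta> \<alpha> d P
           \<longrightarrow> real (card P) \<le> B * (real d + 1)" by blast
  show ?case
  proof (intro exI[of _ "(1 + 1/\<beta>) * (1 + B)"] conjI allI impI)
    show "0 \<le> (1 + 1/\<beta>) * (1 + B)" using b B by simp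
  next
    fix \<alpha> d P assume h: "0 < \<alpha> \<and> \<alpha> < 1 \<and> 2/\<beta>\<^sup>2 \<le> 1/\<alpha> + real (Suc n) \<and> finite P \<and> code \<beta> \<alpha> d P"
    show "real (card P) \<le> (1 + 1/\<beta>) * (1 + B) * (real d + 1)"
      by (rule step[OF b B(1) _ _ _ _ _ _]) (use B(2) h in blast)+
  qed
qed


theorem theorem1:
  fixes \<beta> :: real
  assumes "0 < \<beta>" and "\<beta> \<le> 1"
  shows "\<exists>c::real. \<forall>\<alpha>::real. \<forall>d::nat. \<forall>P.
           0 < \<alpha> \<and> \<alpha> < 1 \<and> d \<ge> 1 \<and>
           spherical_code ({-1..-\<beta>} \<union> {\<alpha>}) d P
           \<longrightarrow> finite P \<and> real (card P) \<le> c * real d"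
proof -
  define n where "n = nat \<lceil>2/\<beta>\<^sup>2\<rceil>"
  obtain B where B0: "B \<ge> 0" and B: "\<forall>\<alpha> d P. 0 < \<alpha> \<and> \<alpha> < 1 \<and> 2/\<beta>\<^sup>2 \<le> 1/\<alpha> + real n \<and> finite P \<and> code \<beta> \<alpha> d P
           \<longrightarrow> real (card P) \<le> B * (real d + 1)"
    using induct_bound[OF assms, of n] by blast
  have nbig: "2/\<beta>\<^sup>2 \<le> real n" unfolding n_def by linarith
  show ?thesis
  proof (intro exI[of _ "2 * B"] allI impI)
    fix \<alpha> :: real and d :: nat and P
    assume h: "0 < \<alpha> \<and> \<alpha> < 1 \<and> d \<ge> 1 \<and> spherical_code ({-1..-\<beta>} \<union> {\<alpha>}) d P"
    have cP: "code \<beta> \<alpha> d P" using h unfolding spherical_code_def code_def by auto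
    have cond: "2/\<beta>\<^sup>2 \<le> 1/\<alpha> + real n" using nbig h by (smt (verit) divide_pos_pos)
    have bnd: "real (card Q) \<le> B * (real d + 1)" if "finite Q" "Q \<subseteq> P" for Q
      using B h cond that code_subset[OF cP that(2)] by blast
    have fin: "finite P"
    proof (rule ccontr)
      assume "infinite P"
      then obtain Q where Q: "finite Q" "card Q = nat \<lceil>B * (real d + 1)\<rceil> + 1" "Q \<subseteq> P"
        using infinite_arbitrarily_large by blast
      have "real (card Q) \<le> B * (real d + 1)" using bnd Q(1,3) by blast
      moreover have "real (card Q) > B * (real d + 1)" using Q(2) by linarith
      ultimately show False by simp
    qed
    have "real (card P) \<le> B * (real d + 1)" using bnd fin by blast
    also have "\<dots> \<le> 2 * B * real d"
    proof -
      have "real d \<ge> 1" using h by simp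
      then have "B * 1 \<le> B * real d" using B0 by (intro mult_left_mono) auto
      then show ?thesis by (simp add: algebra_simps)
    qed
    finally show "finite P \<and> real (card P) \<le> 2 * B * real d" using fin by simp
  qed
qed

end
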